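(* Let $\rho:\mathbb R_+\to\mathbb R_+$ be concave with $\rho(0)=0$, $\rho(x)>0$ for $x>0$, $\rho'$ continuous on $(0,\infty)$ with values in $\mathbb R_+$, $\lim_{x\to0^+}\rho(x)/x=+\infty$, and $\int_0^\varepsilon\frac{1}{\rho(x)}\mathrm dx<\infty$ for some $\varepsilon>0$. Let $c\in\mathbb R_+$ be a constant, $\rho_c(x):=\rho(x)+c$, and $H_c(u):=\int_0^u\frac{1}{c+\rho(x)}\mathrm dx$ for $u\in\mathbb R_+$. Then $H_c$ is well-defined and strictly increasing on $\mathbb R_+$, $H_c(0)=0$ and $\lim_{u\to+\infty}H_c(u)=+\infty$. Moreover, denoting by $H_c^{-1}:\mathbb R_+\to\mathbb R_+$ the inverse function of $H_c$, for every $k_1\ge H_c(1)$ and $k_2,k_3>0$, $$H_c^{-1}(k_1+k_2)\le 2e^{k_2(\rho(1)+c)}H_c^{-1}(k_1)$$ and $$\rho_c\big(k_3H_c^{-1}(k_1+k_2)\big)\le 2e^{k_2(\rho(1)+c)}\rho_c\big(k_3H_c^{-1}(k_1)\big).$$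
   Context: $\mathbb R_+=[0,\infty)$. *)

theory Defs
  imports "HOL-Analysis.Analysis"
begin

definition Hc :: "(real \<Rightarrow> real) \<Rightarrow> real \<Rightarrow> real \<Rightarrow> real" where
  "Hc \<rho> c u = integral {0..u} (\<lambda>x. 1 / (c + \<rho> x))"

definition Hc_inv :: "(real \<Rightarrow> real) \<Rightarrow> real \<Rightarrow> real \<Rightarrow> real" where
  "Hc_inv \<rho> c = the_inv_into {0..} (Hc \<rho> c)"

definition rho_c :: "(real \<Rightarrow> real) \<Rightarrow> real \<Rightarrow> real \<Rightarrow> real" where
  "rho_c \<rho> c x = \<rho> x + c"

end

theory Submission
  imports Defs
begin

theorem lemma2p2:
  fixes \<rho> \<rho>' :: "real \<Rightarrow> real" and c :: real
  assumes nonneg: "\<forall>x\<ge>0. \<rho> x \<ge> 0"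
    and conc: "concave_on {0..} \<rho>"
    and zero: "\<rho> 0 = 0"
    and pos: "\<forall>x>0. \<rho> x > 0"
    and deriv: "\<forall>x>0. (\<rho> has_real_derivative \<rho>' x) (at x)"
    and deriv_cont: "continuous_on {0<..} \<rho>'"
    and deriv_nonneg: "\<forall>x>0. \<rho>' x \<ge> 0"
    and lim0: "filterlim (\<lambda>x. \<rho> x / x) at_top (at_right 0)"
    and integ: "\<exists>\<epsilon>>0. (\<lambda>x. 1 / \<rho> x) integrable_on {0..\<epsilon>}"
    and c: "c \<ge> 0"
  shows "(\<forall>u\<ge>0. (\<lambda>x. 1 / (c + \<rho> x)) integrable_on {0..u})
    \<and> strict_mono_on {0..} (Hc \<rho> c)
    \<and> Hc \<rho> c 0 = 0
    \<and> filterlim (Hc \<rho> c) at_top at_top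
    \<and> bij_betw (Hc \<rho> c) {0..} {0..}
    \<and> (\<forall>k1 k2 k3. k1 \<ge> Hc \<rho> c 1 \<and> k2 > 0 \<and> k3 > 0 \<longrightarrow>
         Hc_inv \<rho> c (k1 + k2) \<le> 2 * exp (k2 * (\<rho> 1 + c)) * Hc_inv \<rho> c k1
       \<and> rho_c \<rho> c (k3 * Hc_inv \<rho> c (k1 + k2))
           \<le> 2 * exp (k2 * (\<rho> 1 + c)) * rho_c \<rho> c (k3 * Hc_inv \<rho> c k1))"
proof -
  define f where "f = (\<lambda>x. 1 / (c + \<rho> x))"
  define K where "K = c + \<rho> 1"
  have Kpos: "K > 0" using pos c by (simp add: K_def add_nonneg_pos)
  have Hdef: "\<And>u. Hc \<rho> c u = integral {0..u} f" by (simp add: Hc_def f_def)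
  have rho_mono: "\<rho> x \<le> \<rho> y" if "0 \<le> x" "x \<le> y" for x y
  proof (cases "x = 0")
    case True then show ?thesis using zero nonneg that by auto
  next
    case False
    then have "x > 0" using that by auto
    show ?thesis
    proof (rule DERIV_nonneg_imp_increasing_open[OF that(2)])
      show "\<And>t. x < t \<Longrightarrow> t < y \<Longrightarrow> \<exists>d. DERIV \<rho> t :> d \<and> d \<ge> 0"
        using deriv deriv_nonneg \<open>x > 0\<close> by (meson less_trans)
      have "\<forall>t\<in>{x..y}. isCont \<rho> t"
        using deriv \<open>x > 0\<close> DERIV_isCont by (metis atLeastAtMost_iff less_le_trans)
      then show "continuous_on {x..y} \<rho>" by (simp add: continuous_at_imp_continuous_on)
    qed
  qed
  have rho_scale: "\<rho> (l * y) \<le> l * \<rho> y" if "0 \<le> y" "1 \<le> l" for l y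
  proof -
    have "\<rho> ((1 - 1/l) *\<^sub>R 0 + (1/l) *\<^sub>R (l*y)) \<ge> (1 - 1/l) * \<rho> 0 + (1/l) * \<rho> (l*y)"
      by (rule concave_onD[OF conc]) (use that in auto)
    then have "\<rho> y \<ge> (1/l) * \<rho> (l*y)" using that zero by simp
    then show ?thesis using that by (simp add: field_simps)
  qed
  have fpos: "f x > 0" if "x > 0" for x using pos c that by (simp add: f_def add_nonneg_pos)
  have fnn: "f x \<ge> 0" if "x \<ge> 0" for x using nonneg c that by (simp add: f_def)
  have fanti: "f y \<le> f x" if "0 < x" "x \<le> y" for x y
  proof -
    have "\<rho> x \<le> \<rho> y" using rho_mono that by auto
    moreover have "c + \<rho> x > 0" using pos c that by (simp add: add_nonneg_pos)
    ultimately show ?thesis unfolding f_def by (simp add: frac_le)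
  qed
  have int_pos: "f integrable_on {a..b}" if "0 < a" for a b
  proof -
    have "mono_on {a..b} (\<lambda>x. - f x)"
      using fanti that by (auto simp: mono_on_def)
    then have "(\<lambda>x. - f x) integrable_on {a..b}" by (rule integrable_on_mono_on)
    then show ?thesis using integrable_neg by fastforce
  qed
  have int0: "f integrable_on {0..u}" for u
  proof (cases "c = 0")
    case True
    obtain e where e: "e > 0" "(\<lambda>x. 1 / \<rho> x) integrable_on {0..e}" using integ by blast
    have fe: "f integrable_on {0..e}" using e True by (simp add: f_def)
    show ?thesis
    proof (cases "u \<le> e")
      case True then show ?thesis
        by (cases "u < 0") (auto intro: integrable_subinterval_real[OF fe])
    next
      case False
      then show ?thesis using Henstock_Kurzweil_Integration.integrable_combine[where a=0 and c=e and b=u and f=f] fe int_pos[of e u] e by auto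
    qed
  next
    case False
    then have cp: "c > 0" using c by auto
    have "f y \<le> f x" if "0 \<le> x" "x \<le> y" for x y
    proof -
      have "\<rho> x \<le> \<rho> y" using rho_mono that by auto
      moreover have "c + \<rho> x > 0" using nonneg cp that by (simp add: add_pos_nonneg)
      ultimately show ?thesis unfolding f_def by (simp add: frac_le)
    qed
    then have "mono_on {0..u} (\<lambda>x. - f x)" by (auto simp: mono_on_def)
    then have "(\<lambda>x. - f x) integrable_on {0..u}" by (rule integrable_on_mono_on)
    then show ?thesis using integrable_neg by fastforce
  qed
  have Hdiff: "Hc \<rho> c b - Hc \<rho> c a = integral {a..b} f" if "0 \<le> a" "a \<le> b" for a b
    using Henstock_Kurzweil_Integration.integral_combine[OF that int0[of b]] unfolding Hdef by simp
  have logb: "(ln v - ln u) / K \<le> Hc \<rho> c v - Hc \<rho> c u" if "1 \<le> u" "u \<le> v" for u v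
  proof -
    have hi: "((\<lambda>x. 1 / (K * x)) has_integral (ln v / K - ln u / K)) {u..v}"
    proof (rule fundamental_theorem_of_calculus[OF that(2)])
      fix x assume "x \<in> {u..v}"
      then have "x > 0" using that by auto
      then show "((\<lambda>x. ln x / K) has_vector_derivative 1 / (K * x)) (at x within {u..v})"
        unfolding has_real_derivative_iff_has_vector_derivative[symmetric]
        using Kpos by (auto intro!: derivative_eq_intros simp: field_simps)
    qed
    have "integral {u..v} (\<lambda>x. 1 / (K * x)) \<le> integral {u..v} f"
    proof (rule integral_le)
      show "(\<lambda>x. 1 / (K * x)) integrable_on {u..v}" using hi by blast
      show "f integrable_on {u..v}" using int_pos that by auto
      fix x assume x: "x \<in> {u..v}"
      then have x1: "x \<ge> 1" using that by auto
      have "\<rho> x = \<rho> (x * 1)" by simp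
      also have "\<dots> \<le> x * \<rho> 1" using rho_scale[of 1 x] x1 by simp
      finally have r: "\<rho> x \<le> x * \<rho> 1" .
      have "c * 1 \<le> c * x" using mult_left_mono[OF x1 c] .
      then have "c + \<rho> x \<le> K * x" using r unfolding K_def by (simp add: algebra_simps)
      moreover have "c + \<rho> x > 0" using pos c x1 by (simp add: add_nonneg_pos)
      ultimately show "1 / (K * x) \<le> f x" unfolding f_def by (simp add: frac_le)
    qed
    then show ?thesis using integral_unique[OF hi] Hdiff[of u v] that
      by (simp add: diff_divide_distrib)
  qed
  have intall: "\<forall>u\<ge>0. (\<lambda>x. 1 / (c + \<rho> x)) integrable_on {0..u}"
    using int0 unfolding f_def by blast
  have H0: "Hc \<rho> c 0 = 0" unfolding Hdef by simp
  have smono: "strict_mono_on {0..} (Hc \<rho> c)"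
  proof (rule strict_mono_onI)
    fix a b :: real assume ab: "a \<in> {0..}" "b \<in> {0..}" "a < b"
    define m where "m = (a + b) / 2"
    have m: "a < m" "m < b" "m > 0" using ab by (auto simp: m_def)
    have "integral {a..b} f = integral {a..m} f + integral {m..b} f"
      using Henstock_Kurzweil_Integration.integral_combine[of a m b f] m int_pos ab
        integrable_subinterval_real[OF int0[of b], of a b] by auto
    moreover have "integral {a..m} f \<ge> 0"
    proof (rule integral_nonneg)
      show "f integrable_on {a..m}" using integrable_subinterval_real[OF int0[of b], of a m] m ab by simp
      show "\<And>x. x \<in> {a..m} \<Longrightarrow> 0 \<le> f x" using ab fnn by auto
    qed
    moreover have "integral {m..b} f \<ge> integral {m..b} (\<lambda>_. f b)"
      by (rule integral_le) (use int_pos m fanti in auto)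
    moreover have "integral {m..b} (\<lambda>_. f b) > 0"
      using m fpos[of b] by simp
    ultimately have "integral {a..b} f > 0" by linarith
    then show "Hc \<rho> c a < Hc \<rho> c b" using Hdiff[of a b] ab by auto
  qed
  have Hnn: "Hc \<rho> c u \<ge> 0" if "u \<ge> 0" for u
    using smono H0 that by (metis atLeast_iff order_le_less strict_mono_onD order.refl)
  have lim: "filterlim (Hc \<rho> c) at_top at_top"
  proof (rule filterlim_at_top_mono)
    show "LIM x at_top. (1 / K) * ln x :> at_top"
      by (rule filterlim_tendsto_pos_mult_at_top[OF tendsto_const]) (use Kpos ln_at_top in auto)
    show "\<forall>\<^sub>F x in at_top. 1 / K * ln x \<le> Hc \<rho> c x"
      using eventually_ge_at_top[of 1]
    proof eventually_elim
      case (elim x)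
      have "(ln x - ln 1) / K \<le> Hc \<rho> c x - Hc \<rho> c 1" using logb[of 1 x] elim by auto
      then show ?case using Hnn[of 1] by simp
    qed
  qed
  have cont: "continuous_on {0..M} (Hc \<rho> c)" for M
    unfolding Hdef by (rule indefinite_integral_continuous_1[OF int0])
  have bij: "bij_betw (Hc \<rho> c) {0..} {0..}"
  proof (rule bij_betw_imageI)
    show "inj_on (Hc \<rho> c) {0..}" using smono by (rule strict_mono_on_imp_inj_on)
    show "Hc \<rho> c ` {0..} = {0..}"
    proof
      show "Hc \<rho> c ` {0..} \<subseteq> {0..}" using Hnn by auto
      show "{0..} \<subseteq> Hc \<rho> c ` {0..}"
      proof
        fix y :: real assume y: "y \<in> {0..}"
        obtain M where M: "M \<ge> 0" "Hc \<rho> c M \<ge> y"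
          using lim[unfolded filterlim_at_top, rule_format, of y] eventually_ge_at_top[of 0]
          by (metis (mono_tags, lifting) eventually_at_top_linorder eventually_conj_iff order.refl)
        obtain x where "0 \<le> x" "x \<le> M" "Hc \<rho> c x = y"
          using IVT'[of "Hc \<rho> c" 0 y M, OF _ M(2) M(1) cont] H0 y by auto
        then show "y \<in> Hc \<rho> c ` {0..}" by force
      qed
    qed
  qed
  have main: "Hc_inv \<rho> c (k1 + k2) \<le> 2 * exp (k2 * (\<rho> 1 + c)) * Hc_inv \<rho> c k1
       \<and> rho_c \<rho> c (k3 * Hc_inv \<rho> c (k1 + k2))
           \<le> 2 * exp (k2 * (\<rho> 1 + c)) * rho_c \<rho> c (k3 * Hc_inv \<rho> c k1)"
    if k: "k1 \<ge> Hc \<rho> c 1" "k2 > 0" "k3 > 0" for k1 k2 k3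
  proof -
    define u where "u = Hc_inv \<rho> c k1"
    define v where "v = Hc_inv \<rho> c (k1 + k2)"
    define E where "E = exp (k2 * K)"
    have k1nn: "k1 \<ge> 0" using k Hnn[of 1] by auto
    have inv: "Hc_inv \<rho> c y \<in> {0..} \<and> Hc \<rho> c (Hc_inv \<rho> c y) = y" if "y \<ge> 0" for y
    proof -
      have "y \<in> Hc \<rho> c ` {0..}" using bij that unfolding bij_betw_def by auto
      moreover have "inj_on (Hc \<rho> c) {0..}" using bij unfolding bij_betw_def by auto
      ultimately show ?thesis unfolding Hc_inv_def
        using the_inv_into_into[of "Hc \<rho> c" "{0..}" y "{0..}"] f_the_inv_into_f[of "Hc \<rho> c" "{0..}" y]
        by auto
    qed
    have u: "u \<ge> 0" "Hc \<rho> c u = k1" using inv[OF k1nn] by (auto simp: u_def)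
    have v: "v \<ge> 0" "Hc \<rho> c v = k1 + k2" using inv[of "k1 + k2"] k1nn k by (auto simp: v_def)
    have u1: "u \<ge> 1"
    proof (rule ccontr)
      assume "\<not> u \<ge> 1"
      then have "Hc \<rho> c u < Hc \<rho> c 1" using strict_mono_onD[OF smono, of u 1] u by auto
      then show False using u k by auto
    qed
    have uv: "u \<le> v"
    proof (rule ccontr)
      assume "\<not> u \<le> v"
      then have "Hc \<rho> c v < Hc \<rho> c u" using strict_mono_onD[OF smono, of v u] u v by auto
      then show False using u v k by auto
    qed
    have "(ln v - ln u) / K \<le> k2" using logb[OF u1 uv] u v by simp
    then have "ln v \<le> ln u + k2 * K" using Kpos by (simp add: field_simps)
    then have "exp (ln v) \<le> exp (ln u + k2 * K)" by simp
    then have vE: "v \<le> u * E" using u1 uv by (simp add: E_def exp_add)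
    have E1: "E \<ge> 1" using k Kpos by (simp add: E_def)
    have part1: "v \<le> 2 * E * u"
    proof -
      have "u * E \<le> 2 * E * u" using u1 E1 by simp
      then show ?thesis using vE by linarith
    qed
    define l where "l = v / u"
    have l: "l \<ge> 1" "l \<le> E" "v = l * u" using u1 uv vE by (auto simp: l_def field_simps)
    have "\<rho> (k3 * v) = \<rho> (l * (k3 * u))" using l by (simp add: algebra_simps)
    also have "\<dots> \<le> l * \<rho> (k3 * u)" using rho_scale l u k by simp
    finally have r: "\<rho> (k3 * v) \<le> l * \<rho> (k3 * u)" .
    have nn: "\<rho> (k3 * u) + c \<ge> 0" using nonneg[rule_format, of "k3 * u"] u k c by simp
    have "\<rho> (k3 * v) + c \<le> l * (\<rho> (k3 * u) + c)"
    proof -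
      have "c * 1 \<le> c * l" using mult_left_mono[OF l(1) c] .
      then show ?thesis using r by (simp add: distrib_left mult.commute)
    qed
    also have "\<dots> \<le> E * (\<rho> (k3 * u) + c)" using l nn by (simp add: mult_right_mono)
    also have "\<dots> \<le> 2 * E * (\<rho> (k3 * u) + c)" using E1 nn by simp
    finally have part2: "\<rho> (k3 * v) + c \<le> 2 * E * (\<rho> (k3 * u) + c)" .
    have EK: "exp (k2 * (\<rho> 1 + c)) = E" by (simp add: E_def K_def add.commute)
    show ?thesis using part1 part2 unfolding EK rho_c_def u_def[symmetric] v_def[symmetric] by simp
  qed
  show ?thesis using intall smono H0 lim bij main by blast
qed

end
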